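(* Let $w$ be a decreasing weight on $(0,\infty)$ such that $w(\infty):=\lim_{t\to\infty}w(t)=0$. Then for every $1\le q<\infty$ there exists a weight $w_q$ such that $$\Big(\int_0^r w(x)\,dx\Big)^q\approx \int_0^r w_q(x)\,dx + r^q\int_r^\infty w_q(x)\,\frac{dx}{x^q},$$ i.e. there is a constant $C>1$, independent of $r$, such that each side is at most $C$ times the other for every $r>0$.
   Context: A weight is a nonnegative measurable function on $(0,\infty)$ that is locally integrable. "Decreasing" means nonincreasing. *)

theory Defs
  imports "HOL-Analysis.Analysis"
begin

definition weight :: "(real \<Rightarrow> real) \<Rightarrow> bool" where
  "weight w \<longleftrightarrow> (\<forall>x>0. 0 \<le> w x) \<and> set_borel_measurable lborel {0<..} w \<and>
     (\<forall>a b. 0 < a \<longrightarrow> set_integrable lborel {a..b} w)"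

definition decreasing_on_pos :: "(real \<Rightarrow> real) \<Rightarrow> bool" where
  "decreasing_on_pos w \<longleftrightarrow> (\<forall>x y. 0 < x \<longrightarrow> x \<le> y \<longrightarrow> w y \<le> w x)"

definition epowr :: "ennreal \<Rightarrow> real \<Rightarrow> ennreal" where
  "epowr x q = (if x = \<infinity> then \<infinity> else ennreal (enn2real x powr q))"

end

theory Submission
  imports Defs
begin

lemma scale2_nn:
  fixes f :: "real \<Rightarrow> ennreal"
  assumes [measurable]: "f \<in> borel_measurable borel"
  shows "(\<integral>\<^sup>+x. f x \<partial>lborel) = 2 * (\<integral>\<^sup>+x. f (2 * x) \<partial>lborel)"
  using nn_integral_real_affine[OF assms, of 2 0] by simp

lemma split_Ioc_nn:
  fixes f :: "real \<Rightarrow> ennreal"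
  assumes [measurable]: "f \<in> borel_measurable borel" and "a \<le> b" "b \<le> c"
  shows "(\<integral>\<^sup>+x\<in>{a<..c}. f x \<partial>lborel) = (\<integral>\<^sup>+x\<in>{a<..b}. f x \<partial>lborel) + (\<integral>\<^sup>+x\<in>{b<..c}. f x \<partial>lborel)"
proof -
  have "{a<..c} = {a<..b} \<union> {b<..c}" using assms by auto
  moreover have "{a<..b} \<inter> {b<..c} = {}" by auto
  ultimately show ?thesis using nn_integral_disjoint_pair[of f lborel "{a<..b}" "{b<..c}"] by simp
qed

lemma split_Ioi_nn:
  fixes f :: "real \<Rightarrow> ennreal"
  assumes [measurable]: "f \<in> borel_measurable borel" and "a \<le> b"
  shows "(\<integral>\<^sup>+x\<in>{a<..}. f x \<partial>lborel) = (\<integral>\<^sup>+x\<in>{a<..b}. f x \<partial>lborel) + (\<integral>\<^sup>+x\<in>{b<..}. f x \<partial>lborel)"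
proof -
  have "{a<..} = {a<..b} \<union> {b<..}" using assms by auto
  moreover have "{a<..b} \<inter> {b<..} = {}" by auto
  ultimately show ?thesis using nn_integral_disjoint_pair[of f lborel "{a<..b}" "{b<..}"] by simp
qed

lemma const_bound_Ioc:
  fixes f :: "real \<Rightarrow> real"
  assumes "a \<le> b" "\<And>x. a < x \<Longrightarrow> x \<le> b \<Longrightarrow> f x \<le> c"
  shows "(\<integral>\<^sup>+x\<in>{a<..b}. ennreal (f x) \<partial>lborel) \<le> ennreal (c * (b - a))"
proof -
  have "(\<integral>\<^sup>+x\<in>{a<..b}. ennreal (f x) \<partial>lborel) \<le> (\<integral>\<^sup>+x. ennreal c * indicator {a<..b} x \<partial>lborel)"
    by (intro nn_integral_mono) (auto simp: assms ennreal_leI split: split_indicator)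
  also have "\<dots> = ennreal c * ennreal (b - a)"
    using assms by (subst nn_integral_cmult_indicator) auto
  also have "\<dots> \<le> ennreal (c * (b - a))"
    by (cases "c \<ge> 0") (auto simp: ennreal_mult' ennreal_neg)
  finally show ?thesis .
qed

lemma const_lbound_Ioc:
  fixes f :: "real \<Rightarrow> real"
  assumes "a \<le> b" "\<And>x. a < x \<Longrightarrow> x \<le> b \<Longrightarrow> c \<le> f x" "0 \<le> c"
  shows "ennreal (c * (b - a)) \<le> (\<integral>\<^sup>+x\<in>{a<..b}. ennreal (f x) \<partial>lborel)"
proof -
  have "ennreal (c * (b - a)) = ennreal c * ennreal (b - a)"
    using assms by (simp add: ennreal_mult)
  also have "\<dots> = (\<integral>\<^sup>+x. ennreal c * indicator {a<..b} x \<partial>lborel)"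
    using assms by (subst nn_integral_cmult_indicator) auto
  also have "\<dots> \<le> (\<integral>\<^sup>+x\<in>{a<..b}. ennreal (f x) \<partial>lborel)"
    by (intro nn_integral_mono) (auto simp: assms ennreal_leI split: split_indicator)
  finally show ?thesis .
qed


locale wsetup =
  fixes w :: "real \<Rightarrow> real" and q :: real
  assumes wpos: "\<And>x. 0 < x \<Longrightarrow> 0 \<le> w x"
   and wmeas: "(\<lambda>x. indicator {0<..} x * w x) \<in> borel_measurable borel"
   and wdec: "\<And>x y. 0 < x \<Longrightarrow> x \<le> y \<Longrightarrow> w y \<le> w x"
   and wlim: "(w \<longlongrightarrow> 0) at_top"
   and q1: "1 \<le> q"
   and fin: "(\<integral>\<^sup>+ x\<in>{0<..1}. ennreal (w x) \<partial>lborel) < \<infinity>"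
begin

definition "wp x = indicator {0<..} x * w x"
definition "Wn x = (\<integral>\<^sup>+ y\<in>{0<..x}. ennreal (wp y) \<partial>lborel)"
definition "W x = enn2real (Wn x)"

lemma wp_meas[measurable]: "wp \<in> borel_measurable borel"
  using wmeas unfolding wp_def[abs_def] by simp

lemma wp_nonneg: "0 \<le> wp x"
  by (auto simp: wp_def wpos split: split_indicator)

lemma wp_pos: "0 < x \<Longrightarrow> wp x = w x"
  by (simp add: wp_def)

lemma Wn_split: "0 \<le> a \<Longrightarrow> a \<le> b \<Longrightarrow> Wn b = Wn a + (\<integral>\<^sup>+ y\<in>{a<..b}. ennreal (wp y) \<partial>lborel)"
  unfolding Wn_def by (rule split_Ioc_nn) auto

lemma piece_upper: "0 < a \<Longrightarrow> a \<le> b \<Longrightarrow> (\<integral>\<^sup>+ y\<in>{a<..b}. ennreal (wp y) \<partial>lborel) \<le> ennreal (w a * (b - a))"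
  by (rule const_bound_Ioc) (auto simp: wp_pos intro: wdec)

lemma piece_lower: "0 \<le> a \<Longrightarrow> a \<le> b \<Longrightarrow> 0 < b \<Longrightarrow> ennreal (w b * (b - a)) \<le> (\<integral>\<^sup>+ y\<in>{a<..b}. ennreal (wp y) \<partial>lborel)"
  by (rule const_lbound_Ioc) (auto simp: wp_pos wpos intro: wdec)

lemma Wn_fin: "Wn x < \<infinity>"
proof -
  have W1: "Wn 1 < \<infinity>"
  proof -
    have "Wn 1 = (\<integral>\<^sup>+ x\<in>{0<..1}. ennreal (w x) \<partial>lborel)"
      unfolding Wn_def by (intro nn_integral_cong) (auto simp: wp_def split: split_indicator)
    then show ?thesis using fin by simp
  qed
  show ?thesis
  proof (cases "x \<le> 1")
    case True
    have "Wn x \<le> Wn 1"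
      unfolding Wn_def by (intro nn_integral_mono) (use True in \<open>auto split: split_indicator\<close>)
    then show ?thesis using W1 by (simp add: le_less_trans)
  next
    case False
    then have "Wn x = Wn 1 + (\<integral>\<^sup>+ y\<in>{1<..x}. ennreal (wp y) \<partial>lborel)"
      by (intro Wn_split) auto
    also have "\<dots> \<le> Wn 1 + ennreal (w 1 * (x - 1))"
      using False by (intro add_left_mono piece_upper) auto
    also have "\<dots> < \<infinity>" using W1 by (simp add: ennreal_add_less_top)
    finally show ?thesis .
  qed
qed

lemma Wn_eq: "Wn x = ennreal (W x)"
  using Wn_fin unfolding W_def by (simp add: less_top)

lemma W_nonneg: "0 \<le> W x"
  by (simp add: W_def)

lemma piece_fin: "(\<integral>\<^sup>+ y\<in>{a<..b}. ennreal (wp y) \<partial>lborel) < \<infinity>" if "0 \<le> a" "a \<le> b" for a b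
proof -
  have "(\<integral>\<^sup>+ y\<in>{a<..b}. ennreal (wp y) \<partial>lborel) \<le> Wn a + (\<integral>\<^sup>+ y\<in>{a<..b}. ennreal (wp y) \<partial>lborel)"
    by (rule add_increasing) auto
  also have "\<dots> = Wn b" using Wn_split[OF that] by simp
  finally show ?thesis using Wn_fin[of b] by (rule le_less_trans)
qed

lemma W_split: "0 \<le> a \<Longrightarrow> a \<le> b \<Longrightarrow> W b = W a + enn2real (\<integral>\<^sup>+ y\<in>{a<..b}. ennreal (wp y) \<partial>lborel)"
  using Wn_split[of a b] piece_fin[of a b] Wn_fin[of a] unfolding W_def
  by (simp add: enn2real_plus)

lemma W_diff_upper: "0 < a \<Longrightarrow> a \<le> b \<Longrightarrow> W b - W a \<le> w a * (b - a)"
proof -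
  assume h: "0 < a" "a \<le> b"
  have "enn2real (\<integral>\<^sup>+ y\<in>{a<..b}. ennreal (wp y) \<partial>lborel) \<le> w a * (b - a)"
    using piece_upper[OF h] wpos[of a] h by (intro enn2real_leI) auto
  then show ?thesis using W_split[of a b] h by simp
qed

lemma W_diff_lower: "0 \<le> a \<Longrightarrow> a \<le> b \<Longrightarrow> 0 < b \<Longrightarrow> w b * (b - a) \<le> W b - W a"
proof -
  assume h: "0 \<le> a" "a \<le> b" "0 < b"
  have "w b * (b - a) \<le> enn2real (\<integral>\<^sup>+ y\<in>{a<..b}. ennreal (wp y) \<partial>lborel)"
  proof -
    have "0 \<le> w b * (b - a)" using h wpos[of b] by simp
    then have "w b * (b - a) = enn2real (ennreal (w b * (b - a)))" by simp
    also have "\<dots> \<le> enn2real (\<integral>\<^sup>+ y\<in>{a<..b}. ennreal (wp y) \<partial>lborel)"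
      using piece_lower[OF h] piece_fin[of a b] h by (intro enn2real_mono) auto
    finally show ?thesis .
  qed
  then show ?thesis using W_split[of a b] h by simp
qed

lemma W_mono: "0 \<le> a \<Longrightarrow> a \<le> b \<Longrightarrow> W a \<le> W b"
  using W_split[of a b] by (simp add: enn2real_nonneg)

lemma W_nonpos: "x \<le> 0 \<Longrightarrow> W x = 0"
  unfolding W_def Wn_def by (simp add: indicator_def)

lemma W_mono_all: "mono W"
proof (rule monoI)
  fix a b :: real assume "a \<le> b"
  then show "W a \<le> W b"
    by (cases "a \<le> 0") (auto simp: W_nonpos W_nonneg W_mono)
qed

lemma W_meas[measurable]: "W \<in> borel_measurable borel"
  by (rule borel_measurable_mono[OF W_mono_all])

lemma xw_le_W: "0 < x \<Longrightarrow> x * w x \<le> W x"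
  using W_diff_lower[of 0 x] W_nonpos[of 0] by (simp add: mult.commute)

lemma W_ratio: "0 < x \<Longrightarrow> x \<le> y \<Longrightarrow> W y / y \<le> W x / x"
proof -
  assume h: "0 < x" "x \<le> y"
  have "W y \<le> W x + w x * (y - x)" using W_diff_upper[OF h] by simp
  also have "\<dots> \<le> W x + (W x / x) * (y - x)"
    using xw_le_W[OF h(1)] h by (intro add_left_mono mult_right_mono) (auto simp: field_simps)
  also have "\<dots> = (W x / x) * y" using h by (simp add: field_simps)
  finally have "W y \<le> (W x / x) * y" .
  then show ?thesis using h by (simp add: pos_divide_le_eq)
qed

end

context wsetup begin

lemma W_small:
  assumes r: "0 < r" and e: "0 < e"
  shows "\<exists>n::nat. W (r / 2^n) < e"
proof -
  define f where "f n y = ennreal (wp y) * indicator {0<..r / 2^n} y" for n :: nat and y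
  have dec: "decseq f"
  proof (intro decseq_SucI le_funI)
    fix n :: nat and y :: real
    have "r / 2^(Suc n) \<le> r / 2^n" using r by (intro divide_left_mono) auto
    then show "f (Suc n) y \<le> f n y" unfolding f_def
      by (auto split: split_indicator)
  qed
  have meas: "f n \<in> borel_measurable lborel" for n unfolding f_def by measurable
  have finn: "(\<integral>\<^sup>+ y. f n y \<partial>lborel) < \<infinity>" for n
    using Wn_fin[of "r / 2^n"] unfolding f_def Wn_def by simp
  have inf0: "(INF n. f n y) = 0" for y
  proof (cases "y > 0")
    case True
    obtain n where n: "(1/2::real)^n < y / r" using real_arch_pow_inv[of "y / r" "1/2"] True r by auto
    then have "r / 2^n < y" using r by (simp add: field_simps power_divide)
    then have "f n y = 0" unfolding f_def by simp
    then show ?thesis by (metis INF_lower antisym iso_tuple_UNIV_I zero_le)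
  next
    case False
    then have "f 0 y = 0" unfolding f_def by simp
    then show ?thesis by (metis INF_lower antisym iso_tuple_UNIV_I zero_le)
  qed
  have "(INF n. (\<integral>\<^sup>+ y. f n y \<partial>lborel)) = (\<integral>\<^sup>+ y. (INF n. f n y) \<partial>lborel)"
    using nn_integral_monotone_convergence_INF_decseq[OF dec meas finn] by simp
  also have "\<dots> = 0" by (simp add: inf0)
  finally have "(INF n. (\<integral>\<^sup>+ y. f n y \<partial>lborel)) < ennreal e" using e by simp
  then obtain n where "(\<integral>\<^sup>+ y. f n y \<partial>lborel) < ennreal e" by (auto simp: INF_less_iff)
  then have "Wn (r / 2^n) < ennreal e" unfolding Wn_def f_def by simp
  then have "W (r / 2^n) < e" using Wn_eq e by (simp add: ennreal_less_iff W_nonneg)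
  then show ?thesis ..
qed

definition "g x = (W x / x) powr (q - 1) * wp x"

lemma g_meas[measurable]: "g \<in> borel_measurable borel"
  unfolding g_def[abs_def] by measurable

lemma g_nonneg: "0 \<le> g x"
  unfolding g_def using wp_nonneg by simp

lemma g_nonpos: "x \<le> 0 \<Longrightarrow> g x = 0"
  unfolding g_def wp_def by simp

lemma g_dec: "0 < x \<Longrightarrow> x \<le> y \<Longrightarrow> g y \<le> g x"
  unfolding g_def
  using W_ratio[of x y] q1 wdec[of x y] wpos[of y] W_nonneg[of y] wp_pos[of x] wp_pos[of y]
  by (intro mult_mono powr_mono2) auto

lemma xg_eq: "0 < x \<Longrightarrow> x powr (q - 1) * g x = W x powr (q - 1) * w x"
proof -
  assume x: "0 < x"
  have "x powr (q - 1) * (W x / x) powr (q - 1) = (x * (W x / x)) powr (q - 1)"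
    by (rule powr_mult[symmetric])
  also have "x * (W x / x) = W x" using x by simp
  finally have "x powr (q - 1) * (W x / x) powr (q - 1) = W x powr (q - 1)" .
  then show ?thesis unfolding g_def using x by (simp add: wp_pos mult.assoc[symmetric])
qed

lemma g_r: "0 < r \<Longrightarrow> r powr q * g r \<le> W r powr q"
proof -
  assume r: "0 < r"
  have "g r \<le> (W r / r) powr (q - 1) * (W r / r)"
    unfolding g_def using xw_le_W[OF r] r W_nonneg[of r]
    by (intro mult_left_mono) (auto simp: wp_pos field_simps)
  also have "\<dots> = (W r / r) powr q"
    using powr_add[of "W r / r" "q - 1" 1] W_nonneg[of r] r by (simp add: powr_one)
  finally have "r powr q * g r \<le> r powr q * (W r / r) powr q" by (simp add: mult_left_mono)
  also have "\<dots> = W r powr q" using r by (simp add: powr_mult[symmetric])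
  finally show ?thesis .
qed

lemma g_lim:
  assumes e: "0 < e"
  shows "\<exists>M. \<forall>y\<ge>M. g y < e"
proof -
  define c where "c = W 1 powr (q - 1) + 1"
  have c: "0 < c" unfolding c_def by (simp add: add_nonneg_pos)
  have "eventually (\<lambda>y. w y < e / c) at_top"
    using order_tendstoD(2)[OF wlim, of "e / c"] e c by simp
  then obtain M0 where M0: "\<And>y. y \<ge> M0 \<Longrightarrow> w y < e / c" by (auto simp: eventually_at_top_linorder)
  have "g y < e" if "y \<ge> max 1 M0" for y
  proof -
    have y: "1 \<le> y" "M0 \<le> y" using that by auto
    have "(W y / y) powr (q - 1) \<le> (W 1 / 1) powr (q - 1)"
      using W_ratio[of 1 y] y q1 W_nonneg[of y] by (intro powr_mono2) auto
    then have "g y \<le> W 1 powr (q - 1) * w y"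
      unfolding g_def using y wpos[of y] by (auto simp: wp_pos intro: mult_right_mono)
    also have "\<dots> \<le> c * w y" unfolding c_def using wpos[of y] y by (intro mult_right_mono) auto
    also have "\<dots> < e" using M0[OF y(2)] c by (simp add: less_divide_eq mult.commute)
    finally show ?thesis .
  qed
  then show ?thesis by blast
qed

end

context wsetup begin

definition "G x = (\<integral>\<^sup>+ y\<in>{0<..x}. ennreal (y powr (q - 1) * g y) \<partial>lborel)"

lemma G_upper:
  assumes r: "0 < r" shows "G r \<le> ennreal (W r powr q)"
proof -
  have "G r \<le> (\<integral>\<^sup>+ y. ennreal (W r powr (q - 1)) * (ennreal (wp y) * indicator {0<..r} y) \<partial>lborel)"
    unfolding G_def
  proof (intro nn_integral_mono)
    fix y
    show "ennreal (y powr (q - 1) * g y) * indicator {0<..r} y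
          \<le> ennreal (W r powr (q - 1)) * (ennreal (wp y) * indicator {0<..r} y)"
    proof (cases "0 < y \<and> y \<le> r")
      case True
      then have "y powr (q - 1) * g y \<le> W r powr (q - 1) * wp y"
        using xg_eq[of y] W_mono[of y r] W_nonneg[of y] q1 wpos[of y] wp_pos[of y]
        by (auto intro!: mult_right_mono powr_mono2)
      then show ?thesis using True wp_nonneg[of y] by (simp add: ennreal_mult[symmetric] ennreal_leI)
    qed auto
  qed
  also have "\<dots> = ennreal (W r powr (q - 1)) * Wn r"
    unfolding Wn_def by (subst nn_integral_cmult) auto
  also have "\<dots> = ennreal (W r powr (q - 1) * W r)"
    by (simp add: Wn_eq ennreal_mult W_nonneg)
  also have "W r powr (q - 1) * W r = W r powr q"
    using powr_add[of "W r" "q - 1" 1] W_nonneg[of r] by (simp add: powr_one)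
  finally show ?thesis .
qed

lemma G_fin: "G x < \<infinity>"
proof (cases "0 < x")
  case True
  then show ?thesis using G_upper[OF True] by (simp add: le_less_trans)
next
  case False
  then have "{0<..x} = {}" by auto
  then have "G x = 0" unfolding G_def by simp
  then show ?thesis by simp
qed

lemma G_lower:
  assumes r: "0 < r" shows "ennreal ((W r / 4) powr q) \<le> G r"
proof (cases "W r = 0")
  case True then show ?thesis by simp
next
  case False
  then have Wp: "0 < W r" using W_nonneg[of r] by simp
  obtain n0 :: nat where "W (r / 2^n0) < W r / 2" using W_small[OF r, of "W r / 2"] Wp by auto
  define n where "n = (LEAST n::nat. W (r / 2^n) \<le> W r / 2)"
  have n: "W (r / 2^n) \<le> W r / 2" unfolding n_def
    by (rule LeastI[of _ n0]) (use \<open>W (r / 2^n0) < W r / 2\<close> in simp)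
  have "n \<noteq> 0" using n Wp by (intro notI) simp
  then obtain m where m: "n = Suc m" by (cases n) auto
  have "\<not> W (r / 2^m) \<le> W r / 2" unfolding n_def
    using not_less_Least[of m "\<lambda>n. W (r / 2^n) \<le> W r / 2"] m n_def by auto
  then have Wm: "W r / 2 < W (r / 2^m)" by simp
  define x0 where "x0 = r / 2^n"
  have x0: "0 < x0" "x0 \<le> r" unfolding x0_def using r by (auto simp: field_simps)
  have "r / 2^m = 2 * x0" unfolding x0_def m by simp
  then have "W (2 * x0) / (2 * x0) \<le> W x0 / x0" using x0 by (intro W_ratio) auto
  then have "W (2 * x0) \<le> 2 * W x0" using x0 by (simp add: field_simps)
  then have Wx0: "W r / 4 \<le> W x0" using Wm \<open>r / 2^m = 2 * x0\<close> by simp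
  have Wx0': "W x0 \<le> W r / 2" using n unfolding x0_def .
  define c where "c = (W r / 4) powr (q - 1)"
  have c0: "0 \<le> c" unfolding c_def by simp
  have "G r = (\<integral>\<^sup>+ y\<in>{0<..x0}. ennreal (y powr (q - 1) * g y) \<partial>lborel) + (\<integral>\<^sup>+ y\<in>{x0<..r}. ennreal (y powr (q - 1) * g y) \<partial>lborel)"
    unfolding G_def using x0 by (intro split_Ioc_nn) auto
  also have "\<dots> \<ge> (\<integral>\<^sup>+ y\<in>{x0<..r}. ennreal (y powr (q - 1) * g y) \<partial>lborel)" by simp
  finally have G1: "(\<integral>\<^sup>+ y\<in>{x0<..r}. ennreal (y powr (q - 1) * g y) \<partial>lborel) \<le> G r" .
  have "(\<integral>\<^sup>+ y. ennreal c * (ennreal (wp y) * indicator {x0<..r} y) \<partial>lborel)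
        \<le> (\<integral>\<^sup>+ y\<in>{x0<..r}. ennreal (y powr (q - 1) * g y) \<partial>lborel)"
  proof (intro nn_integral_mono)
    fix y
    show "ennreal c * (ennreal (wp y) * indicator {x0<..r} y) \<le> ennreal (y powr (q - 1) * g y) * indicator {x0<..r} y"
    proof (cases "x0 < y \<and> y \<le> r")
      case True
      then have y: "0 < y" using x0 by simp
      have "W r / 4 \<le> W y" using Wx0 W_mono[of x0 y] True x0 by simp
      then have "c * wp y \<le> y powr (q - 1) * g y"
        unfolding c_def using xg_eq[OF y] wp_pos[OF y] wpos[OF y] q1 Wp
        by (auto intro!: mult_right_mono powr_mono2)
      then show ?thesis using True c0 wp_nonneg[of y] by (simp add: ennreal_mult[symmetric] ennreal_leI)
    qed auto
  qed
  moreover have "(\<integral>\<^sup>+ y. ennreal c * (ennreal (wp y) * indicator {x0<..r} y) \<partial>lborel)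
        = ennreal c * (\<integral>\<^sup>+ y\<in>{x0<..r}. ennreal (wp y) \<partial>lborel)"
    by (subst nn_integral_cmult) auto
  moreover have "(\<integral>\<^sup>+ y\<in>{x0<..r}. ennreal (wp y) \<partial>lborel) = ennreal (W r - W x0)"
  proof -
    have "W r = W x0 + enn2real (\<integral>\<^sup>+ y\<in>{x0<..r}. ennreal (wp y) \<partial>lborel)"
      using W_split[of x0 r] x0 by simp
    moreover have "(\<integral>\<^sup>+ y\<in>{x0<..r}. ennreal (wp y) \<partial>lborel) < \<infinity>" using piece_fin[of x0 r] x0 by simp
    ultimately show ?thesis by (simp add: less_top ennreal_enn2real_if)
  qed
  ultimately have "ennreal c * ennreal (W r - W x0) \<le> G r"
    using G1 by (metis order_trans)
  moreover have "0 \<le> W r - W x0" using W_mono[of x0 r] x0 by simp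
  ultimately have "ennreal (c * (W r - W x0)) \<le> G r"
    using c0 by (simp add: ennreal_mult)
  moreover have "(W r / 4) powr q \<le> c * (W r - W x0)"
  proof -
    have "(W r / 4) powr q = c * (W r / 4)"
      unfolding c_def using powr_add[of "W r / 4" "q - 1" 1] W_nonneg[of r] by (simp add: powr_one)
    also have "\<dots> \<le> c * (W r - W x0)" using Wx0' c0 W_nonneg[of r] by (intro mult_left_mono) auto
    finally show ?thesis .
  qed
  ultimately show ?thesis by (meson ennreal_leI order_trans)
qed

end

context wsetup begin

definition "H x = (\<integral>\<^sup>+ y\<in>{0<..x}. ennreal (y powr (q - 1) * (g y - g (2 * y))) \<partial>lborel)"
definition "I a b = (\<integral>\<^sup>+ y\<in>{a<..b}. ennreal (g y / y) \<partial>lborel)"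
definition "TT a b = (\<integral>\<^sup>+ y\<in>{a<..b}. ennreal ((g y - g (2 * y)) / y) \<partial>lborel)"
definition "T a = (\<integral>\<^sup>+ y\<in>{a<..}. ennreal ((g y - g (2 * y)) / y) \<partial>lborel)"

lemma g2_le: "0 < y \<Longrightarrow> g (2 * y) \<le> g y"
  by (rule g_dec) auto

lemma H_eq1:
  assumes r: "0 < r"
  shows "G r = H r + (\<integral>\<^sup>+ y\<in>{0<..r}. ennreal (y powr (q - 1) * g (2 * y)) \<partial>lborel)"
proof -
  have "G r = (\<integral>\<^sup>+ y. ennreal (y powr (q - 1) * (g y - g (2 * y))) * indicator {0<..r} y
      + ennreal (y powr (q - 1) * g (2 * y)) * indicator {0<..r} y \<partial>lborel)"
    unfolding G_def
  proof (intro nn_integral_cong)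
    fix y :: real
    show "ennreal (y powr (q - 1) * g y) * indicator {0<..r} y =
      ennreal (y powr (q - 1) * (g y - g (2 * y))) * indicator {0<..r} y +
      ennreal (y powr (q - 1) * g (2 * y)) * indicator {0<..r} y"
    proof (cases "0 < y \<and> y \<le> r")
      case True
      then have "0 \<le> y powr (q - 1) * (g y - g (2 * y))" "0 \<le> y powr (q - 1) * g (2 * y)"
        using g2_le[of y] g_nonneg[of "2*y"] by auto
      then show ?thesis using True by (simp add: ennreal_plus[symmetric] algebra_simps del: ennreal_plus)
    qed auto
  qed
  also have "\<dots> = H r + (\<integral>\<^sup>+ y\<in>{0<..r}. ennreal (y powr (q - 1) * g (2 * y)) \<partial>lborel)"
    unfolding H_def by (rule nn_integral_add) auto
  finally show ?thesis .
qed

lemma H_eq2: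
  assumes r: "0 < r"
  shows "G (2 * r) = ennreal (2 powr q) * (\<integral>\<^sup>+ y\<in>{0<..r}. ennreal (y powr (q - 1) * g (2 * y)) \<partial>lborel)"
proof -
  have "G (2 * r) = 2 * (\<integral>\<^sup>+ x. ennreal ((2 * x) powr (q - 1) * g (2 * x)) * indicator {0<..2 * r} (2 * x) \<partial>lborel)"
    unfolding G_def by (rule scale2_nn) auto
  also have "\<dots> = 2 * (\<integral>\<^sup>+ x. ennreal (2 powr (q - 1)) * (ennreal (x powr (q - 1) * g (2 * x)) * indicator {0<..r} x) \<partial>lborel)"
  proof (rule arg_cong2[where f="(*)"], rule refl, rule nn_integral_cong)
    fix x :: real
    show "ennreal ((2 * x) powr (q - 1) * g (2 * x)) * indicator {0<..2 * r} (2 * x) =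
         ennreal (2 powr (q - 1)) * (ennreal (x powr (q - 1) * g (2 * x)) * indicator {0<..r} x)"
      using g_nonneg[of "2*x"]
      by (auto simp: powr_mult ennreal_mult[symmetric] mult.assoc split: split_indicator)
  qed
  also have "\<dots> = 2 * (ennreal (2 powr (q - 1)) * (\<integral>\<^sup>+ y\<in>{0<..r}. ennreal (y powr (q - 1) * g (2 * y)) \<partial>lborel))"
    by (subst nn_integral_cmult) auto
  also have "\<dots> = ennreal (2 powr q) * (\<integral>\<^sup>+ y\<in>{0<..r}. ennreal (y powr (q - 1) * g (2 * y)) \<partial>lborel)"
  proof -
    have e: "2 * 2 powr (q - 1) = (2::real) powr q"
      using powr_add[of 2 1 "q - 1"] by simp
    have "(2::ennreal) * ennreal (2 powr (q - 1)) = ennreal 2 * ennreal (2 powr (q - 1))" by simp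
    also have "\<dots> = ennreal (2 * 2 powr (q - 1))" by (simp add: ennreal_mult')
    also have "\<dots> = ennreal (2 powr q)" using e by simp
    finally have "(2::ennreal) * ennreal (2 powr (q - 1)) = ennreal (2 powr q)" .
    then show ?thesis by (simp add: mult.assoc[symmetric])
  qed
  finally show ?thesis .
qed

lemma I_fin: "0 < a \<Longrightarrow> a \<le> b \<Longrightarrow> I a b \<le> ennreal (g a / a * (b - a))"
  unfolding I_def
  by (rule const_bound_Ioc) (auto intro!: frac_le g_dec g_nonneg)

lemma I_split: "0 \<le> a \<Longrightarrow> a \<le> b \<Longrightarrow> b \<le> c \<Longrightarrow> I a c = I a b + I b c"
  unfolding I_def by (rule split_Ioc_nn) auto

lemma I_scale: "0 < a \<Longrightarrow> (\<integral>\<^sup>+ y\<in>{a<..b}. ennreal (g (2 * y) / y) \<partial>lborel) = I (2 * a) (2 * b)"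
proof -
  assume a: "0 < a"
  have "I (2 * a) (2 * b) = 2 * (\<integral>\<^sup>+ x. ennreal (g (2 * x) / (2 * x)) * indicator {2 * a<..2 * b} (2 * x) \<partial>lborel)"
    unfolding I_def by (rule scale2_nn) auto
  also have "\<dots> = (\<integral>\<^sup>+ x. 2 * (ennreal (g (2 * x) / (2 * x)) * indicator {a<..b} x) \<partial>lborel)"
    by (subst nn_integral_cmult) (auto simp: indicator_def)
  also have "\<dots> = (\<integral>\<^sup>+ y\<in>{a<..b}. ennreal (g (2 * y) / y) \<partial>lborel)"
  proof (intro nn_integral_cong)
    fix x :: real
    show "2 * (ennreal (g (2 * x) / (2 * x)) * indicator {a<..b} x) = ennreal (g (2 * x) / x) * indicator {a<..b} x"
    proof (cases "a < x \<and> x \<le> b")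
      case True
      then have x: "0 < x" using a by simp
      have "g (2 * x) / x = 2 * (g (2 * x) / (2 * x))" using x by simp
      moreover have "ennreal (2 * (g (2 * x) / (2 * x))) = ennreal 2 * ennreal (g (2 * x) / (2 * x))"
        by (rule ennreal_mult') simp
      ultimately have "ennreal (g (2 * x) / x) = ennreal 2 * ennreal (g (2 * x) / (2 * x))"
        by metis
      then show ?thesis using True by simp
    qed auto
  qed
  finally show ?thesis by simp
qed

lemma TT_eq:
  assumes r: "0 < r" and M: "2 * r \<le> M"
  shows "TT r M + I M (2 * M) = I r (2 * r)"
proof -
  have "I r M = (\<integral>\<^sup>+ y. ennreal ((g y - g (2 * y)) / y) * indicator {r<..M} y
      + ennreal (g (2 * y) / y) * indicator {r<..M} y \<partial>lborel)"
    unfolding I_def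
  proof (intro nn_integral_cong)
    fix y :: real
    show "ennreal (g y / y) * indicator {r<..M} y = ennreal ((g y - g (2 * y)) / y) * indicator {r<..M} y
      + ennreal (g (2 * y) / y) * indicator {r<..M} y"
    proof (cases "r < y \<and> y \<le> M")
      case True
      then have y: "0 < y" using r by simp
      have "0 \<le> (g y - g (2 * y)) / y" "0 \<le> g (2 * y) / y"
        using g2_le[OF y] g_nonneg[of "2*y"] y by auto
      then show ?thesis using True by (simp add: ennreal_plus[symmetric] diff_divide_distrib del: ennreal_plus)
    qed auto
  qed
  also have "\<dots> = TT r M + (\<integral>\<^sup>+ y\<in>{r<..M}. ennreal (g (2 * y) / y) \<partial>lborel)"
    unfolding TT_def by (rule nn_integral_add) auto
  also have "\<dots> = TT r M + I (2 * r) (2 * M)" using I_scale r by simp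
  also have "I (2 * r) (2 * M) = I (2 * r) M + I M (2 * M)" using r M by (intro I_split) auto
  finally have 1: "I r M = TT r M + I M (2 * M) + I (2 * r) M" by (simp add: algebra_simps)
  have 2: "I r M = I r (2 * r) + I (2 * r) M" using r M by (intro I_split) auto
  have fin: "I (2 * r) M \<noteq> \<infinity>" using I_fin[of "2 * r" M] r M by (auto simp: top_unique)
  from 1 2 fin show ?thesis by (metis add.commute ennreal_add_left_cancel)
qed

lemma T_le: assumes r: "0 < r" shows "T r \<le> I r (2 * r)"
proof -
  define f where "f n y = ennreal ((g y - g (2 * y)) / y) * indicator {r<..2 * r + real n} y" for n :: nat and y
  have inc: "incseq f"
    by (intro incseq_SucI le_funI) (auto simp: f_def split: split_indicator)
  have sup: "(SUP n. f n y) = ennreal ((g y - g (2 * y)) / y) * indicator {r<..} y" for y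
  proof (rule antisym)
    show "(SUP n. f n y) \<le> ennreal ((g y - g (2 * y)) / y) * indicator {r<..} y"
      by (intro SUP_least) (auto simp: f_def split: split_indicator)
  next
    obtain n :: nat where "y \<le> real n" using real_arch_simple by blast
    then have "f n y = ennreal ((g y - g (2 * y)) / y) * indicator {r<..} y"
      using r by (auto simp: f_def split: split_indicator)
    then show "ennreal ((g y - g (2 * y)) / y) * indicator {r<..} y \<le> (SUP n. f n y)"
      by (metis SUP_upper UNIV_I)
  qed
  have "T r = (\<integral>\<^sup>+ y. (SUP n. f n y) \<partial>lborel)" unfolding T_def sup ..
  also have "\<dots> = (SUP n. (\<integral>\<^sup>+ y. f n y \<partial>lborel))"
    by (rule nn_integral_monotone_convergence_SUP[OF inc]) (unfold f_def, measurable)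
  also have "\<dots> \<le> I r (2 * r)"
  proof (intro SUP_least)
    fix n :: nat
    have "(\<integral>\<^sup>+ y. f n y \<partial>lborel) = TT r (2 * r + real n)" unfolding f_def TT_def ..
    also have "\<dots> \<le> TT r (2 * r + real n) + I (2 * r + real n) (2 * (2 * r + real n))" by simp
    also have "\<dots> = I r (2 * r)" using r by (intro TT_eq) auto
    finally show "(\<integral>\<^sup>+ y. f n y \<partial>lborel) \<le> I r (2 * r)" .
  qed
  finally show ?thesis .
qed

lemma T_ge: assumes r: "0 < r" shows "I r (2 * r) \<le> T r"
proof (rule ennreal_le_epsilon)
  fix e :: real assume e: "0 < e"
  obtain M0 where M0: "\<And>y. y \<ge> M0 \<Longrightarrow> g y < e" using g_lim[OF e] by blast
  define M where "M = max M0 (2 * r)"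
  have M: "M0 \<le> M" "2 * r \<le> M" "0 < M" using r unfolding M_def by auto
  have "I r (2 * r) = TT r M + I M (2 * M)" using TT_eq[OF r M(2)] by simp
  also have "TT r M \<le> T r" unfolding TT_def T_def
    by (intro nn_integral_mono) (auto split: split_indicator)
  also have "I M (2 * M) \<le> ennreal (g M / M * (2 * M - M))" using I_fin[of M "2 * M"] M by simp
  also have "g M / M * (2 * M - M) = g M" using M by simp
  also have "ennreal (g M) \<le> ennreal e" using M0[OF M(1)] by (simp add: ennreal_leI)
  finally show "I r (2 * r) \<le> T r + ennreal e" by (simp add: add_mono)
qed

end

lemma fin_eq: assumes "x \<noteq> (\<infinity>::ennreal)" shows "x = ennreal (enn2real x)"
proof -
  have "x < top" using assms by (simp add: less_top)
  then show ?thesis by simp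
qed

context wsetup begin

definition "wq y = y powr (q - 1) * (g y - g (2 * y))"

lemma wq_weight: "weight wq"
  unfolding weight_def
proof (intro conjI allI impI)
  fix x :: real assume "0 < x" then show "0 \<le> wq x" unfolding wq_def using g2_le[of x] by simp
next
  show "set_borel_measurable lborel {0<..} wq"
    unfolding set_borel_measurable_def wq_def[abs_def] by measurable
next
  fix a b :: real assume a: "0 < a"
  show "set_integrable lborel {a..b} wq"
    unfolding set_integrable_def
  proof (rule integrableI_bounded_set_indicator[where B="b powr (q - 1) * g a"])
    show "wq \<in> borel_measurable lborel" unfolding wq_def[abs_def] by measurable
    show "AE x in lborel. x \<in> {a..b} \<longrightarrow> norm (wq x) \<le> b powr (q - 1) * g a"
    proof (intro AE_I2 impI)
      fix x assume x: "x \<in> {a..b}"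
      then have x0: "0 < x" using a by simp
      have "norm (wq x) = x powr (q - 1) * (g x - g (2 * x))"
        unfolding wq_def using g2_le[OF x0] by simp
      also have "\<dots> \<le> b powr (q - 1) * g a"
        using x x0 q1 g_nonneg[of "2*x"] g_dec[of a x] a g2_le[OF x0]
        by (intro mult_mono powr_mono2) auto
      finally show "norm (wq x) \<le> b powr (q - 1) * g a" .
    qed
    show "emeasure lborel {a..b} < \<infinity>" by (cases "a \<le> b") auto
  qed auto
qed

lemma G_step: assumes r: "0 < r"
  shows "G (2 * r) \<le> G r + ennreal ((2 * r) powr q) * I r (2 * r)"
proof -
  have A: "G (2 * r) = G r + (\<integral>\<^sup>+ y\<in>{r<..2*r}. ennreal (y powr (q - 1) * g y) \<partial>lborel)"
    unfolding G_def using r by (intro split_Ioc_nn) auto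
  have B: "(\<integral>\<^sup>+ y\<in>{r<..2*r}. ennreal (y powr (q - 1) * g y) \<partial>lborel)
      \<le> (\<integral>\<^sup>+ y. ennreal ((2 * r) powr q) * (ennreal (g y / y) * indicator {r<..2*r} y) \<partial>lborel)"
  proof (rule nn_integral_mono)
    fix y
    show "ennreal (y powr (q - 1) * g y) * indicator {r<..2 * r} y
        \<le> ennreal ((2 * r) powr q) * (ennreal (g y / y) * indicator {r<..2 * r} y)"
    proof (cases "r < y \<and> y \<le> 2 * r")
      case True
      then have y: "0 < y" using r by simp
      have "y powr (q - 1) = y powr q / y powr 1" by (rule powr_diff)
      also have "y powr 1 = y" using y by simp
      finally have yq: "y powr (q - 1) = y powr q / y" .
      have "y powr (q - 1) * g y = y powr q * (g y / y)" unfolding yq by simp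
      also have "\<dots> \<le> (2 * r) powr q * (g y / y)"
        using True y q1 g_nonneg[of y] by (intro mult_right_mono powr_mono2) auto
      finally have le: "y powr (q - 1) * g y \<le> (2 * r) powr q * (g y / y)" .
      have "ennreal ((2 * r) powr q) * ennreal (g y / y) = ennreal ((2 * r) powr q * (g y / y))"
        using g_nonneg[of y] y by (intro ennreal_mult[symmetric]) auto
      then show ?thesis using True le by (simp add: ennreal_leI)
    next
      case False
      then show ?thesis by simp
    qed
  qed
  have C: "(\<integral>\<^sup>+ y. ennreal ((2 * r) powr q) * (ennreal (g y / y) * indicator {r<..2*r} y) \<partial>lborel)
      = ennreal ((2 * r) powr q) * I r (2 * r)"
    unfolding I_def by (rule nn_integral_cmult) simp
  show ?thesis using add_left_mono[OF B, of "G r"] unfolding A C .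
qed

lemma main_fin:
  assumes r: "0 < r"
  shows "epowr (\<integral>\<^sup>+ x \<in> {0<..r}. ennreal (w x) \<partial>lborel) q \<le> ennreal (2 * 4 powr q) *
           ((\<integral>\<^sup>+ x \<in> {0<..r}. ennreal (wq x) \<partial>lborel)
             + ennreal (r powr q) * (\<integral>\<^sup>+ x \<in> {r<..}. ennreal (wq x / x powr q) \<partial>lborel))
       \<and> ((\<integral>\<^sup>+ x \<in> {0<..r}. ennreal (wq x) \<partial>lborel)
             + ennreal (r powr q) * (\<integral>\<^sup>+ x \<in> {r<..}. ennreal (wq x / x powr q) \<partial>lborel))
         \<le> ennreal (2 * 4 powr q) * epowr (\<integral>\<^sup>+ x \<in> {0<..r}. ennreal (w x) \<partial>lborel) q"
proof -
  define K where "K = (\<integral>\<^sup>+ y\<in>{0<..r}. ennreal (y powr (q - 1) * g (2 * y)) \<partial>lborel)"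
  have L: "epowr (\<integral>\<^sup>+ x \<in> {0<..r}. ennreal (w x) \<partial>lborel) q = ennreal (W r powr q)"
  proof -
    have "(\<integral>\<^sup>+ x \<in> {0<..r}. ennreal (w x) \<partial>lborel) = Wn r"
      unfolding Wn_def by (intro nn_integral_cong) (auto simp: wp_def split: split_indicator)
    then show ?thesis by (simp add: Wn_eq epowr_def W_nonneg)
  qed
  have R1: "(\<integral>\<^sup>+ x \<in> {0<..r}. ennreal (wq x) \<partial>lborel) = H r"
    unfolding H_def wq_def ..
  have R2: "(\<integral>\<^sup>+ x \<in> {r<..}. ennreal (wq x / x powr q) \<partial>lborel) = T r"
    unfolding T_def
  proof (intro nn_integral_cong)
    fix x :: real
    show "ennreal (wq x / x powr q) * indicator {r<..} x = ennreal ((g x - g (2 * x)) / x) * indicator {r<..} x"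
    proof (cases "r < x")
      case True
      then have x: "0 < x" using r by simp
      have "x powr (q - 1) = x powr q / x powr 1" by (rule powr_diff)
      also have "x powr 1 = x" using x by simp
      finally have "x powr (q - 1) = x powr q / x" .
      then have "wq x / x powr q = (g x - g (2 * x)) / x" unfolding wq_def using x by simp
      then show ?thesis by simp
    qed auto
  qed
  have TS: "T r = I r (2 * r)" using T_le[OF r] T_ge[OF r] by simp
  have Sfin: "I r (2 * r) \<le> ennreal (g r)" using I_fin[of r "2 * r"] r by simp
  have GHK: "G r = H r + K" and G2K: "G (2 * r) = ennreal (2 powr q) * K"
    using H_eq1[OF r] H_eq2[OF r] unfolding K_def by auto
  have Gf: "G r \<noteq> \<infinity>" "G (2 * r) \<noteq> \<infinity>" using G_fin[of r] G_fin[of "2*r"] by auto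
  have Hf: "H r \<noteq> \<infinity>" "K \<noteq> \<infinity>" using GHK Gf by auto
  have Sf: "I r (2 * r) \<noteq> \<infinity>" using Sfin by (auto simp: top_unique)
  define Gr G2 Hr Kr Sr where "Gr = enn2real (G r)" "G2 = enn2real (G (2 * r))" "Hr = enn2real (H r)"
    "Kr = enn2real K" "Sr = enn2real (I r (2 * r))"
  have eqs: "G r = ennreal Gr" "G (2 * r) = ennreal G2" "H r = ennreal Hr" "K = ennreal Kr" "I r (2 * r) = ennreal Sr"
    unfolding Gr_G2_Hr_Kr_Sr_def
       apply (rule fin_eq, rule Gf(1))
      apply (rule fin_eq, rule Gf(2))
     apply (rule fin_eq, rule Hf(1))
    apply (rule fin_eq, rule Hf(2))
    apply (rule fin_eq, rule Sf)
    done
  have nn: "0 \<le> Gr" "0 \<le> G2" "0 \<le> Hr" "0 \<le> Kr" "0 \<le> Sr" unfolding Gr_G2_Hr_Kr_Sr_def by auto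
  have P: "2 \<le> (2::real) powr q" using powr_mono[of 1 q 2] q1 by simp
  have e1: "Gr = Hr + Kr" using GHK unfolding eqs using nn by (simp add: ennreal_plus[symmetric] del: ennreal_plus)
  have e2: "G2 = 2 powr q * Kr" using G2K unfolding eqs using nn by (simp add: ennreal_mult[symmetric])
  have e3: "G2 \<le> Gr + (2 * r) powr q * Sr" using G_step[OF r] unfolding eqs using nn
    by (simp add: ennreal_mult[symmetric] ennreal_plus[symmetric] del: ennreal_plus)
  have e4: "Sr \<le> g r" using Sfin unfolding eqs using g_nonneg[of r] by simp
  have e5: "Gr \<le> W r powr q" using G_upper[OF r] unfolding eqs by (simp add: W_nonneg)
  have e6: "(W r / 4) powr q \<le> Gr" using G_lower[OF r] unfolding eqs using nn by simp
  have e7: "r powr q * g r \<le> W r powr q" using g_r[OF r] .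
  have rq: "(2 * r) powr q = 2 powr q * r powr q" by (simp add: powr_mult)
  define Rr where "Rr = Hr + r powr q * Sr"
  have R: "(\<integral>\<^sup>+ x \<in> {0<..r}. ennreal (wq x) \<partial>lborel)
             + ennreal (r powr q) * (\<integral>\<^sup>+ x \<in> {r<..}. ennreal (wq x / x powr q) \<partial>lborel) = ennreal Rr"
    unfolding R1 R2 TS eqs Rr_def using nn by (simp add: ennreal_mult[symmetric] ennreal_plus[symmetric] del: ennreal_plus)
  have rS: "r powr q * Sr \<le> W r powr q"
    using e4 e7 by (meson mult_left_mono order_trans powr_ge_zero)
  have up: "Rr \<le> 2 * W r powr q" unfolding Rr_def using e1 e5 rS nn by linarith
  have Kb: "2 powr q * Kr \<le> Gr + 2 powr q * (r powr q * Sr)" using e2 e3 rq by (simp add: mult.assoc)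
  have "Kr \<le> Gr / 2 powr q + r powr q * Sr"
  proof -
    have "2 powr q * Kr \<le> 2 powr q * (Gr / 2 powr q + r powr q * Sr)"
      using Kb P by (simp add: distrib_left)
    then show ?thesis using P by simp
  qed
  moreover have "Gr / 2 powr q \<le> Gr / 2" using P nn by (intro divide_left_mono) auto
  ultimately have low: "Gr / 2 \<le> Rr" unfolding Rr_def using e1 by linarith
  have W4: "(W r / 4) powr q = W r powr q / 4 powr q" using W_nonneg[of r] by (simp add: powr_divide)
  have "W r powr q \<le> 4 powr q * Gr" using e6 unfolding W4 by (simp add: divide_le_eq mult.commute)
  also have "\<dots> \<le> 4 powr q * (2 * Rr)" using low by (intro mult_left_mono) auto
  finally have low2: "W r powr q \<le> 2 * 4 powr q * Rr" by simp
  have "1 \<le> (4::real) powr q" using q1 by (intro ge_one_powr_ge_zero) auto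
  then have "1 * W r powr q \<le> 4 powr q * W r powr q" by (intro mult_right_mono) auto
  then have up2: "Rr \<le> 2 * 4 powr q * W r powr q" using up by simp
  have R0: "0 \<le> Rr" unfolding Rr_def using nn by simp
  have C0: "0 \<le> 2 * 4 powr (q::real)" by simp
  have "ennreal (W r powr q) \<le> ennreal (2 * 4 powr q * Rr)" using low2 by (rule ennreal_leI)
  moreover have "ennreal (Rr) \<le> ennreal (2 * 4 powr q * W r powr q)" using up2 by (rule ennreal_leI)
  ultimately show ?thesis unfolding L R using R0 C0 by (simp add: ennreal_mult)
qed

end

lemma main_inf:
  fixes w :: "real \<Rightarrow> real" and q :: real
  assumes wpos: "\<And>x. 0 < x \<Longrightarrow> 0 \<le> w x"
   and wmeas: "(\<lambda>x. indicator {0<..} x * w x) \<in> borel_measurable borel"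
   and wdec: "\<And>x y. 0 < x \<Longrightarrow> x \<le> y \<Longrightarrow> w y \<le> w x"
   and inf: "\<not> (\<integral>\<^sup>+ x\<in>{0<..1}. ennreal (w x) \<partial>lborel) < \<infinity>"
   and r: "0 < r"
  shows "(\<integral>\<^sup>+ x\<in>{0<..r}. ennreal (w x) \<partial>lborel) = \<infinity>"
proof -
  define f where "f x = ennreal (indicator {0<..} x * w x)" for x
  have fm[measurable]: "f \<in> borel_measurable borel" unfolding f_def[abs_def] using wmeas by measurable
  have eq: "(\<integral>\<^sup>+ x\<in>{a<..b}. ennreal (w x) \<partial>lborel) = (\<integral>\<^sup>+ x\<in>{a<..b}. f x \<partial>lborel)" if "0 \<le> a" for a b
  proof (intro nn_integral_cong)
    fix x
    show "ennreal (w x) * indicator {a<..b} x = f x * indicator {a<..b} x"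
      unfolding f_def using that by (cases "a < x \<and> x \<le> b") auto
  qed
  have I1: "(\<integral>\<^sup>+ x\<in>{0<..1}. f x \<partial>lborel) = \<infinity>"
  proof -
    have "\<not> (\<integral>\<^sup>+ x\<in>{0<..1}. f x \<partial>lborel) < \<infinity>" using inf unfolding eq[of 0 1, OF order.refl] .
    then show ?thesis by (simp add: less_top[symmetric])
  qed
  show ?thesis
  proof (cases "1 \<le> r")
    case True
    have "(\<integral>\<^sup>+ x\<in>{0<..1}. f x \<partial>lborel) \<le> (\<integral>\<^sup>+ x\<in>{0<..r}. f x \<partial>lborel)"
    proof (intro nn_integral_mono)
      fix x
      show "f x * indicator {0<..1} x \<le> f x * indicator {0<..r} x"
        using True by (cases "0 < x \<and> x \<le> 1") auto
    qed
    then have "(\<integral>\<^sup>+ x\<in>{0<..r}. f x \<partial>lborel) = \<infinity>" using I1 by (simp add: top_unique)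
    then show ?thesis unfolding eq[of 0 r, OF order.refl] .
  next
    case False
    have split: "(\<integral>\<^sup>+ x\<in>{0<..1}. f x \<partial>lborel) = (\<integral>\<^sup>+ x\<in>{0<..r}. f x \<partial>lborel) + (\<integral>\<^sup>+ x\<in>{r<..1}. f x \<partial>lborel)"
      using False r by (intro split_Ioc_nn) auto
    have "(\<integral>\<^sup>+ x\<in>{r<..1}. ennreal (w x) \<partial>lborel) \<le> ennreal (w r * (1 - r))"
      by (rule const_bound_Ioc) (use False r wdec[of r] in auto)
    then have B: "(\<integral>\<^sup>+ x\<in>{r<..1}. f x \<partial>lborel) < \<infinity>"
    proof -
      have "(\<integral>\<^sup>+ x\<in>{r<..1}. f x \<partial>lborel) \<le> ennreal (w r * (1 - r))"
        using \<open>(\<integral>\<^sup>+ x\<in>{r<..1}. ennreal (w x) \<partial>lborel) \<le> ennreal (w r * (1 - r))\<close>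
        unfolding eq[of r 1, OF less_imp_le[OF r]] .
      also have "\<dots> < \<infinity>" by simp
      finally show ?thesis .
    qed
    show ?thesis
    proof (rule ccontr)
      assume "(\<integral>\<^sup>+ x\<in>{0<..r}. ennreal (w x) \<partial>lborel) \<noteq> \<infinity>"
      then have "(\<integral>\<^sup>+ x\<in>{0<..r}. f x \<partial>lborel) \<noteq> \<infinity>" unfolding eq[of 0 r, OF order.refl] .
      then have "(\<integral>\<^sup>+ x\<in>{0<..r}. f x \<partial>lborel) < \<infinity>" by (simp add: less_top)
      then have "(\<integral>\<^sup>+ x\<in>{0<..r}. f x \<partial>lborel) + (\<integral>\<^sup>+ x\<in>{r<..1}. f x \<partial>lborel) < \<infinity>"
        using B by (simp add: ennreal_add_less_top)
      then have "(\<integral>\<^sup>+ x\<in>{0<..1}. f x \<partial>lborel) < \<infinity>" unfolding split .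
      then show False using I1 by simp
    qed
  qed
qed

theorem lemma2p11:
  fixes w :: "real \<Rightarrow> real" and q :: real
  assumes "weight w" and "decreasing_on_pos w" and "(w \<longlongrightarrow> 0) at_top"
    and "1 \<le> q"
  shows "\<exists>wq. weight wq \<and> (\<exists>C::real. C > 1 \<and> (\<forall>r>0.
     let L = epowr (\<integral>\<^sup>+ x \<in> {0<..r}. ennreal (w x) \<partial>lborel) q;
         R = (\<integral>\<^sup>+ x \<in> {0<..r}. ennreal (wq x) \<partial>lborel)
             + ennreal (r powr q) * (\<integral>\<^sup>+ x \<in> {r<..}. ennreal (wq x / x powr q) \<partial>lborel)
     in L \<le> ennreal C * R \<and> R \<le> ennreal C * L))"
proof -
  have wpos: "\<And>x. 0 < x \<Longrightarrow> 0 \<le> w x" using assms(1) unfolding weight_def by auto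
  have wmeas: "(\<lambda>x. indicator {0<..} x * w x) \<in> borel_measurable borel"
    using assms(1) unfolding weight_def set_borel_measurable_def by simp
  have wdec: "\<And>x y. 0 < x \<Longrightarrow> x \<le> y \<Longrightarrow> w y \<le> w x"
    using assms(2) unfolding decreasing_on_pos_def by auto
  have "(1::real) \<le> 4 powr q" using assms(4) by (intro ge_one_powr_ge_zero) auto
  then have C: "(1::real) < 2 * 4 powr q" by simp
  show ?thesis
  proof (cases "(\<integral>\<^sup>+ x\<in>{0<..1}. ennreal (w x) \<partial>lborel) < \<infinity>")
    case True
    interpret wsetup w q using wpos wmeas wdec assms(3,4) True by unfold_locales auto
    show ?thesis
    proof (rule exI[of _ wq], intro conjI)
      show "weight wq" by (rule wq_weight)
      show "\<exists>C::real. C > 1 \<and> (\<forall>r>0.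
         let L = epowr (\<integral>\<^sup>+ x \<in> {0<..r}. ennreal (w x) \<partial>lborel) q;
             R = (\<integral>\<^sup>+ x \<in> {0<..r}. ennreal (wq x) \<partial>lborel)
                 + ennreal (r powr q) * (\<integral>\<^sup>+ x \<in> {r<..}. ennreal (wq x / x powr q) \<partial>lborel)
         in L \<le> ennreal C * R \<and> R \<le> ennreal C * L)"
      proof (rule exI[of _ "2 * 4 powr q"], intro conjI allI impI)
        show "(1::real) < 2 * 4 powr q" by (fact C)
        fix r :: real assume r: "0 < r"
        show "let L = epowr (\<integral>\<^sup>+ x \<in> {0<..r}. ennreal (w x) \<partial>lborel) q;
             R = (\<integral>\<^sup>+ x \<in> {0<..r}. ennreal (wq x) \<partial>lborel)
                 + ennreal (r powr q) * (\<integral>\<^sup>+ x \<in> {r<..}. ennreal (wq x / x powr q) \<partial>lborel)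
         in L \<le> ennreal (2 * 4 powr q) * R \<and> R \<le> ennreal (2 * 4 powr q) * L"
          unfolding Let_def by (rule main_fin[OF r])
      qed
    qed
  next
    case False
    have Linf: "(\<integral>\<^sup>+ x\<in>{0<..r}. ennreal (w x) \<partial>lborel) = \<infinity>" if "0 < r" for r
      using main_inf[OF wpos wmeas wdec False that] .
    have Cpos: "ennreal (2 * 4 powr q) * \<infinity> = \<infinity>" using C by (simp add: ennreal_mult_top)
    show ?thesis
    proof (intro exI conjI)
      show "weight w" by fact
      show "(1::real) < 2 * 4 powr q" by (fact C)
      show "\<forall>r>0. let L = epowr (\<integral>\<^sup>+ x \<in> {0<..r}. ennreal (w x) \<partial>lborel) q;
         R = (\<integral>\<^sup>+ x \<in> {0<..r}. ennreal (w x) \<partial>lborel)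
             + ennreal (r powr q) * (\<integral>\<^sup>+ x \<in> {r<..}. ennreal (w x / x powr q) \<partial>lborel)
         in L \<le> ennreal (2 * 4 powr q) * R \<and> R \<le> ennreal (2 * 4 powr q) * L"
      proof (intro allI impI)
        fix r :: real assume r: "0 < r"
        have L: "epowr (\<integral>\<^sup>+ x \<in> {0<..r}. ennreal (w x) \<partial>lborel) q = \<infinity>"
          unfolding Linf[OF r] epowr_def by simp
        have R: "(\<integral>\<^sup>+ x \<in> {0<..r}. ennreal (w x) \<partial>lborel)
             + ennreal (r powr q) * (\<integral>\<^sup>+ x \<in> {r<..}. ennreal (w x / x powr q) \<partial>lborel) = \<infinity>"
          unfolding Linf[OF r] by simp
        show "let L = epowr (\<integral>\<^sup>+ x \<in> {0<..r}. ennreal (w x) \<partial>lborel) q;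
         R = (\<integral>\<^sup>+ x \<in> {0<..r}. ennreal (w x) \<partial>lborel)
             + ennreal (r powr q) * (\<integral>\<^sup>+ x \<in> {r<..}. ennreal (w x / x powr q) \<partial>lborel)
         in L \<le> ennreal (2 * 4 powr q) * R \<and> R \<le> ennreal (2 * 4 powr q) * L"
          unfolding Let_def L R Cpos by simp
      qed
    qed
  qed
qed

end
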